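(* Let $K>2$, let $n_1<n_2$ be positive integers, and let $n_3,\dots,n_K$ be positive integers. Let $\tau$ be the time of the first emptying event and $p$ the type emptied at time $\tau$. Then for every $t$ with $\Pr[\tau=t]>0$, \[ \Pr[p=1\mid \tau=t]\ \ge\ \Pr[p=2\mid \tau=t]. \]
   Context: Initial stocks $\vec n^{(0)}=(n_1,\dots,n_K)$ of $K$ goodie types evolve as follows: at each step $t=1,2,\dots$, as long as at least two coordinates of $\vec n^{(t-1)}$ are nonzero, an index $i$ is chosen uniformly at random (independently of the past) among the indices with $n_i^{(t-1)}>0$, and $\vec n^{(t)}=\vec n^{(t-1)}-\vec e_i$ ($\vec e_i$ the $i$-th standard unit vector). The time of the first emptying event is $\tau=\min\{t : \exists i \text{ with } n_i^{(t)}=0 \text{ and } n_i^{(0)}>0\}$; exactly one type is emptied at that step, and $p$ denotes that type. *)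

theory Defs
  imports "HOL-Probability.Probability"
begin

text \<open>Goodie types are indexed by 1..K; a state is a stock vector v :: nat => nat
 (values outside 1..K are irrelevant).\<close>

definition nonzero_types :: "nat \<Rightarrow> (nat \<Rightarrow> nat) \<Rightarrow> nat set" where
  "nonzero_types K v = {i \<in> {1..K}. 0 < v i}"

text \<open>One step of the process: if at least two coordinates are nonzero, pick a nonzero
 index uniformly at random and decrement it; otherwise the process has stopped
 (the state is kept constant, which does not affect the first emptying time).\<close>
definition step :: "nat \<Rightarrow> (nat \<Rightarrow> nat) \<Rightarrow> (nat \<Rightarrow> nat) pmf" where
  "step K v = (if 2 \<le> card (nonzero_types K v)
     then map_pmf (\<lambda>i. v(i := v i - 1)) (pmf_of_set (nonzero_types K v))
     else return_pmf v)"

primrec traj :: "nat \<Rightarrow> (nat \<Rightarrow> nat) \<Rightarrow> nat \<Rightarrow> (nat \<Rightarrow> nat) list pmf" where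
  "traj K n0 0 = return_pmf [n0]"
| "traj K n0 (Suc t) = bind_pmf (traj K n0 t)
     (\<lambda>xs. map_pmf (\<lambda>v. xs @ [v]) (step K (last xs)))"

definition emptied :: "nat \<Rightarrow> (nat \<Rightarrow> nat) \<Rightarrow> (nat \<Rightarrow> nat) list \<Rightarrow> nat \<Rightarrow> nat set" where
  "emptied K n0 xs s = {i \<in> {1..K}. 0 < n0 i \<and> (xs ! s) i = 0}"

definition tau_eq :: "nat \<Rightarrow> (nat \<Rightarrow> nat) \<Rightarrow> (nat \<Rightarrow> nat) list \<Rightarrow> nat \<Rightarrow> bool" where
  "tau_eq K n0 xs t \<longleftrightarrow> emptied K n0 xs t \<noteq> {} \<and> (\<forall>s<t. emptied K n0 xs s = {})"

definition prob_tau :: "nat \<Rightarrow> (nat \<Rightarrow> nat) \<Rightarrow> nat \<Rightarrow> real" where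
  "prob_tau K n0 t = measure_pmf.prob (traj K n0 t) {xs. tau_eq K n0 xs t}"

definition prob_tau_p :: "nat \<Rightarrow> (nat \<Rightarrow> nat) \<Rightarrow> nat \<Rightarrow> nat \<Rightarrow> real" where
  "prob_tau_p K n0 t j = measure_pmf.prob (traj K n0 t)
     {xs. tau_eq K n0 xs t \<and> j \<in> emptied K n0 xs t}"

definition cond_p :: "nat \<Rightarrow> (nat \<Rightarrow> nat) \<Rightarrow> nat \<Rightarrow> nat \<Rightarrow> real" where
  "cond_p K n0 t j = prob_tau_p K n0 t j / prob_tau K n0 t"

end

theory Submission
  imports Defs
begin

fun G :: "nat \<Rightarrow> (nat \<Rightarrow> nat) \<Rightarrow> nat \<Rightarrow> nat \<Rightarrow> real" where
  "G K v 0 j = 0"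
| "G K v (Suc t) j = (\<Sum>i\<in>{1..K}. if v i = 1 then (if t = 0 \<and> i = j then 1 else 0)
        else G K (v(i := v i - 1)) t j) / real K"

definition sw :: "nat \<Rightarrow> nat" where "sw i = (if i = 1 then 2 else if i = 2 then 1 else i)"

lemma sw_sw[simp]: "sw (sw i) = i" by (simp add: sw_def)

lemma sw_bij: "2 \<le> K \<Longrightarrow> bij_betw sw {1..K} {1..K}"
  by (rule bij_betw_byWitness[where f'=sw]) (auto simp: sw_def)

lemma G_sw: "2 \<le> K \<Longrightarrow> G K (v \<circ> sw) t j = G K v t (sw j)"
proof (induction t arbitrary: v j)
  case 0 then show ?case by simp
next
  case (Suc t)
  let ?g = "\<lambda>i. if (v\<circ>sw) i = 1 then (if t = 0 \<and> i = j then 1 else 0)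
        else G K ((v\<circ>sw)(i := (v\<circ>sw) i - 1)) t j"
  have "sum ?g {1..K} = sum (\<lambda>i. ?g (sw i)) {1..K}"
    using sum.reindex_bij_betw[OF sw_bij[OF Suc.prems], of ?g] by simp
  also have "\<dots> = (\<Sum>i\<in>{1..K}. if v i = 1 then (if t = 0 \<and> i = sw j then 1 else 0)
        else G K (v(i := v i - 1)) t (sw j))"
  proof (rule sum.cong[OF refl])
    fix i
    have e: "(v\<circ>sw)(sw i := v i - 1) = (v(i := v i - 1)) \<circ> sw"
      by (rule ext) (auto simp: sw_def)
    have f: "(sw i = j) = (i = sw j)" by (metis sw_sw)
    show "?g (sw i) = (if v i = 1 then (if t = 0 \<and> i = sw j then 1 else 0)
        else G K (v(i := v i - 1)) t (sw j))"
      by (simp only: e f comp_apply sw_sw Suc.IH[OF Suc.prems])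
  qed
  finally show ?case by (simp only: G.simps)
qed

lemma G_mono: "2 \<le> K \<Longrightarrow> 0 < v 1 \<Longrightarrow> v 1 \<le> v 2 \<Longrightarrow> G K v t 2 \<le> G K v t 1"
proof (induction t arbitrary: v)
  case 0 then show ?case by simp
next
  case (Suc t)
  define g where "g = (\<lambda>j i. if v i = 1 then (if t = 0 \<and> i = j then 1 else 0)
        else G K (v(i := v i - 1)) t j)"
  have split: "sum f {1..K} = f 1 + f 2 + sum f {3..K}" for f :: "nat \<Rightarrow> real"
  proof -
    have "{1..K} = insert 1 (insert 2 {3..K})" using Suc.prems(1) by auto
    then show ?thesis by simp
  qed
  have rest: "sum (g 2) {3..K} \<le> sum (g 1) {3..K}"
  proof (rule sum_mono)
    fix i assume i: "i \<in> {3..K}"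
    show "g 2 i \<le> g 1 i"
    proof (cases "v i = 1")
      case True then show ?thesis using i by (simp add: g_def)
    next
      case False
      have "G K (v(i := v i - 1)) t 2 \<le> G K (v(i := v i - 1)) t 1"
        using i Suc.prems by (intro Suc.IH) auto
      then show ?thesis using False by (simp add: g_def)
    qed
  qed
  have first: "g 2 1 + g 2 2 \<le> g 1 1 + g 1 2"
  proof (cases "v 1 < v 2")
    case lt: True
    have t2: "g 2 2 \<le> g 1 2"
    proof -
      have "v 2 \<noteq> 1" using lt Suc.prems by auto
      moreover have "G K (v(2 := v 2 - 1)) t 2 \<le> G K (v(2 := v 2 - 1)) t 1"
        using lt Suc.prems by (intro Suc.IH) auto
      ultimately show ?thesis by (simp add: g_def)
    qed
    have t1: "g 2 1 \<le> g 1 1"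
    proof (cases "v 1 = 1")
      case True then show ?thesis by (simp add: g_def)
    next
      case False
      have "G K (v(1 := v 1 - 1)) t 2 \<le> G K (v(1 := v 1 - 1)) t 1"
        using False Suc.prems by (intro Suc.IH) auto
      then show ?thesis using False by (simp add: g_def)
    qed
    show ?thesis using t1 t2 by simp
  next
    case False
    then have eq: "v 1 = v 2" using Suc.prems by simp
    show ?thesis
    proof (cases "v 1 = 1")
      case True then show ?thesis using eq by (simp add: g_def)
    next
      case False
      have e: "v(2 := v 2 - 1) = (v(1 := v 1 - 1)) \<circ> sw"
        using eq by (auto simp: sw_def)
      have a: "G K (v(2 := v 2 - 1)) t 1 = G K (v(1 := v 1 - 1)) t 2"
        unfolding e using G_sw[OF Suc.prems(1)] by (simp add: sw_def)
      have b: "G K (v(2 := v 2 - 1)) t 2 = G K (v(1 := v 1 - 1)) t 1"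
        unfolding e using G_sw[OF Suc.prems(1)] by (simp add: sw_def)
      show ?thesis using False eq a b by (simp add: g_def)
    qed
  qed
  have "sum (g 2) {1..K} \<le> sum (g 1) {1..K}"
    unfolding split using rest first by simp
  then show ?case by (simp add: g_def divide_right_mono)
qed

lemma traj_set: "xs \<in> set_pmf (traj K v t) \<Longrightarrow> length xs = Suc t \<and> hd xs = v"
proof (induction t arbitrary: xs)
  case 0 then show ?case by simp
next
  case (Suc t)
  then obtain ys w where "ys \<in> set_pmf (traj K v t)" "xs = ys @ [w]" by auto
  with Suc.IH[of ys] show ?case by (cases ys) auto
qed

lemma traj_Suc': "traj K v (Suc t) = bind_pmf (step K v) (\<lambda>w. map_pmf (\<lambda>xs. v # xs) (traj K w t))"
proof (induction t arbitrary: v)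
  case 0 then show ?case by (simp add: bind_return_pmf map_pmf_def)
next
  case (Suc t)
  have "traj K v (Suc (Suc t)) = bind_pmf (traj K v (Suc t))
     (\<lambda>xs. map_pmf (\<lambda>u. xs @ [u]) (step K (last xs)))" by simp
  also have "\<dots> = bind_pmf (bind_pmf (step K v) (\<lambda>w. map_pmf (\<lambda>xs. v # xs) (traj K w t)))
     (\<lambda>xs. map_pmf (\<lambda>u. xs @ [u]) (step K (last xs)))"
    by (simp only: Suc.IH)
  also have "\<dots> = bind_pmf (step K v) (\<lambda>w. bind_pmf (traj K w t)
     (\<lambda>ys. map_pmf (\<lambda>u. (v # ys) @ [u]) (step K (last (v # ys)))))"
    by (simp only: bind_assoc_pmf bind_map_pmf)
  also have "\<dots> = bind_pmf (step K v) (\<lambda>w. bind_pmf (traj K w t)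
     (\<lambda>ys. map_pmf (\<lambda>xs. v # xs) (map_pmf (\<lambda>u. ys @ [u]) (step K (last ys)))))"
  proof (intro bind_pmf_cong refl)
    fix w ys assume "ys \<in> set_pmf (traj K w t)"
    then have "ys \<noteq> []" using traj_set[of ys K w t] by auto
    then show "map_pmf (\<lambda>u. (v # ys) @ [u]) (step K (last (v # ys))) =
      map_pmf (\<lambda>xs. v # xs) (map_pmf (\<lambda>u. ys @ [u]) (step K (last ys)))"
      by (simp add: pmf.map_comp o_def)
  qed
  also have "\<dots> = bind_pmf (step K v) (\<lambda>w. map_pmf (\<lambda>xs. v # xs) (traj K w (Suc t)))"
    by (simp add: map_bind_pmf)
  finally show ?case .
qed

lemma prob_as_pmf: "measure_pmf.prob N {x. P x} = pmf (map_pmf P N) True"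
proof -
  have "pmf (map_pmf P N) True = measure_pmf.prob (map_pmf P N) {True}"
    by (simp add: measure_pmf_single)
  also have "\<dots> = measure_pmf.prob N {x. P x}" by (simp add: vimage_def)
  finally show ?thesis by simp
qed

lemma prob_bind: "measure_pmf.prob (bind_pmf M f) {x. P x} = (\<integral>w. measure_pmf.prob (f w) {x. P x} \<partial>M)"
  by (simp add: prob_as_pmf map_bind_pmf pmf_bind)

lemma main_prob:
  assumes "2 \<le> K" "\<forall>i\<in>{1..K}. 0 < v i"
  shows "measure_pmf.prob (traj K v t) {xs. tau_eq K v xs t \<and> j \<in> emptied K v xs t} = G K v t j"
  using assms(2)
proof (induction t arbitrary: v)
  case 0
  have "emptied K v [v] 0 = {}" using 0 by (auto simp: emptied_def)
  then show ?case by (simp add: tau_eq_def indicator_def)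
next
  case (Suc t)
  have nz: "nonzero_types K v = {1..K}" using Suc.prems by (auto simp: nonzero_types_def)
  have stepv: "step K v = map_pmf (\<lambda>i. v(i := v i - 1)) (pmf_of_set {1..K})"
    using assms(1) by (simp add: step_def nz)
  have tm: "measure_pmf.prob (traj K (v(i := v i - 1)) t)
        {ys. tau_eq K v (v # ys) (Suc t) \<and> j \<in> emptied K v (v # ys) (Suc t)}
      = (if v i = 1 then (if t = 0 \<and> i = j then 1 else 0) else G K (v(i := v i - 1)) t j)"
    if i: "i \<in> {1..K}" for i
  proof -
    define w where "w = v(i := v i - 1)"
    have e0: "emptied K v (v # ys) 0 = {}" for ys using Suc.prems by (auto simp: emptied_def)
    have eS: "emptied K v (v # ys) (Suc s) = {k \<in> {1..K}. (ys ! s) k = 0}" for ys s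
      using Suc.prems by (auto simp: emptied_def)
    show ?thesis
    proof (cases "v i = 1")
      case False
      have "0 < v i" using Suc.prems i by blast
      with False have wpos: "\<forall>k\<in>{1..K}. 0 < w k" using Suc.prems by (auto simp: w_def)
      have ew: "emptied K w ys s = {k \<in> {1..K}. (ys ! s) k = 0}" for ys s
        using wpos by (auto simp: emptied_def)
      have "{ys. tau_eq K v (v # ys) (Suc t) \<and> j \<in> emptied K v (v # ys) (Suc t)}
          = {ys. tau_eq K w ys t \<and> j \<in> emptied K w ys t}"
        by (auto simp: tau_eq_def e0 eS ew less_Suc_eq_0_disj) (metis less_numeral_extra(3))
      then show ?thesis using Suc.IH[OF wpos] False by (simp only: w_def[symmetric]) simp
    next
      case True
      show ?thesis
      proof (cases t)
        case 0
        have "emptied K v [v, w] 1 = {i}"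
          using eS[of "[w]" 0] Suc.prems True i by (auto simp: w_def) (metis atLeastAtMost_iff less_numeral_extra(3))
        then have P: "(tau_eq K v [v, w] (Suc 0) \<and> j \<in> emptied K v [v, w] (Suc 0)) = (i = j)"
          using e0[of "[w]"] by (auto simp: tau_eq_def less_Suc_eq)
        show ?thesis unfolding w_def[symmetric] using True 0 P by (simp add: indicator_def)
      next
        case (Suc t')
        have "set_pmf (traj K w t) \<inter>
           {ys. tau_eq K v (v # ys) (Suc t) \<and> j \<in> emptied K v (v # ys) (Suc t)} = {}"
        proof (rule ccontr)
          assume "\<not> ?thesis"
          then obtain ys where ys: "ys \<in> set_pmf (traj K w t)"
            "tau_eq K v (v # ys) (Suc t)" by auto
          then have "length ys = Suc t" "hd ys = w" using traj_set by blast+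
          then have "ys ! 0 = w" by (cases ys) auto
          then have "i \<in> emptied K v (v # ys) 1" using eS[of ys 0] i True by (simp add: w_def)
          moreover have "emptied K v (v # ys) 1 = {}" using ys(2) Suc by (auto simp: tau_eq_def)
          ultimately show False by simp
        qed
        then show ?thesis unfolding w_def[symmetric] measure_pmf_zero_iff[symmetric]
          using True Suc by simp
      qed
    qed
  qed
  have "measure_pmf.prob (traj K v (Suc t)) {xs. tau_eq K v xs (Suc t) \<and> j \<in> emptied K v xs (Suc t)}
     = (\<integral>w. measure_pmf.prob (traj K w t)
        {ys. tau_eq K v (v # ys) (Suc t) \<and> j \<in> emptied K v (v # ys) (Suc t)} \<partial>step K v)"
    by (simp only: traj_Suc' prob_bind measure_map_pmf vimage_def mem_Collect_eq)
  also have "\<dots> = (\<Sum>i\<in>{1..K}. measure_pmf.prob (traj K (v(i := v i - 1)) t)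
        {ys. tau_eq K v (v # ys) (Suc t) \<and> j \<in> emptied K v (v # ys) (Suc t)}) / real K"
    using assms(1) by (simp add: stepv integral_pmf_of_set)
  also have "\<dots> = G K v (Suc t) j"
    unfolding G.simps by (rule arg_cong[where f="\<lambda>x. x / real K"], rule sum.cong[OF refl], rule tm)
  finally show ?case .
qed

theorem lemma12:
  fixes K :: nat and n :: "nat \<Rightarrow> nat" and t :: nat
  assumes "K > 2"
    and "0 < n 1" and "n 1 < n 2"
    and "\<forall>i\<in>{3..K}. 0 < n i"
    and "prob_tau K n t > 0"
  shows "cond_p K n t 1 \<ge> cond_p K n t 2"
proof -
  have pos: "\<forall>i\<in>{1..K}. 0 < n i"
  proof
    fix i assume "i \<in> {1..K}"
    then have "i = 1 \<or> i = 2 \<or> i \<in> {3..K}" by auto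
    then show "0 < n i" using assms by auto
  qed
  have K2: "2 \<le> K" using assms(1) by simp
  have "prob_tau_p K n t 2 \<le> prob_tau_p K n t 1"
    unfolding prob_tau_p_def main_prob[OF K2 pos]
    using G_mono[OF K2] assms(2,3) by simp
  then show ?thesis unfolding cond_p_def using assms(5) by (simp add: divide_right_mono)
qed

end
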